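(* A 2-edge-colored graph $G$ is PC acyclic of type 5 if and only if $G$ is bipartite and has no PC cycle.
   Context: A 2-edge-colored graph is a finite undirected graph in which every edge is colored with one of two colors. A walk $v_1e_1v_2\dots e_{p-1}v_p$ is properly colored (PC) if consecutive edges $e_i,e_{i+1}$ have different colors and, if closed ($v_1=v_p$), $e_{p-1}$ and $e_1$ also differ in color; a PC cycle is a PC closed walk whose vertices other than the first/last are distinct. An ordering $v_1,\dots,v_n$ of $V(G)$ is of type 5 if for every $i\in[n]$, all edges from $v_i$ to $\{v_{i+1},\dots,v_n\}$ have the same color, all edges from $v_i$ to $\{v_1,\dots,v_{i-1}\}$ have the same color, and these two colors are different. $G$ is PC acyclic of type 5 if it has an ordering of its vertices of type 5. *)

theory Defs
  imports Main
begin

definition two_edge_colored_graph :: "'a set \<Rightarrow> ('a \<Rightarrow> 'a \<Rightarrow> bool) \<Rightarrow> ('a \<Rightarrow> 'a \<Rightarrow> bool) \<Rightarrow> bool" where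
  "two_edge_colored_graph V E c \<longleftrightarrow>
     finite V \<and>
     (\<forall>u v. E u v \<longrightarrow> u \<in> V \<and> v \<in> V) \<and>
     (\<forall>u v. E u v \<longrightarrow> E v u) \<and>
     (\<forall>v. \<not> E v v) \<and>
     (\<forall>u v. E u v \<longrightarrow> c u v = c v u)"

definition pc_cycle :: "'a set \<Rightarrow> ('a \<Rightarrow> 'a \<Rightarrow> bool) \<Rightarrow> ('a \<Rightarrow> 'a \<Rightarrow> bool) \<Rightarrow> 'a list \<Rightarrow> bool" where
  "pc_cycle V E c xs \<longleftrightarrow>
     (let n = length xs in
       n \<ge> 2 \<and> distinct xs \<and> set xs \<subseteq> V \<and>
       (\<forall>i<n. E (xs ! i) (xs ! ((i + 1) mod n))) \<and>
       (\<forall>i<n. c (xs ! i) (xs ! ((i + 1) mod n)) \<noteq>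
               c (xs ! ((i + 1) mod n)) (xs ! ((i + 2) mod n))))"

definition has_pc_cycle :: "'a set \<Rightarrow> ('a \<Rightarrow> 'a \<Rightarrow> bool) \<Rightarrow> ('a \<Rightarrow> 'a \<Rightarrow> bool) \<Rightarrow> bool" where
  "has_pc_cycle V E c \<longleftrightarrow> (\<exists>xs. pc_cycle V E c xs)"

definition bipartite :: "'a set \<Rightarrow> ('a \<Rightarrow> 'a \<Rightarrow> bool) \<Rightarrow> bool" where
  "bipartite V E \<longleftrightarrow> (\<exists>A. A \<subseteq> V \<and> (\<forall>u v. E u v \<longrightarrow> (u \<in> A \<longleftrightarrow> v \<notin> A)))"

definition type5_ordering :: "'a set \<Rightarrow> ('a \<Rightarrow> 'a \<Rightarrow> bool) \<Rightarrow> ('a \<Rightarrow> 'a \<Rightarrow> bool) \<Rightarrow> 'a list \<Rightarrow> bool" where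
  "type5_ordering V E c vs \<longleftrightarrow>
     distinct vs \<and> set vs = V \<and>
     (\<forall>i<length vs. \<exists>a b. a \<noteq> b \<and>
        (\<forall>j<length vs. i < j \<longrightarrow> E (vs ! i) (vs ! j) \<longrightarrow> c (vs ! i) (vs ! j) = a) \<and>
        (\<forall>j<i. E (vs ! i) (vs ! j) \<longrightarrow> c (vs ! i) (vs ! j) = b))"

definition pc_acyclic_type5 :: "'a set \<Rightarrow> ('a \<Rightarrow> 'a \<Rightarrow> bool) \<Rightarrow> ('a \<Rightarrow> 'a \<Rightarrow> bool) \<Rightarrow> bool" where
  "pc_acyclic_type5 V E c \<longleftrightarrow> (\<exists>vs. type5_ordering V E c vs)"

end

theory Submission
  imports Defs
begin

lemma cyc_from_walk:
  assumes G: "two_edge_colored_graph V E c"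
    and bip: "\<forall>u v. E u v \<longrightarrow> (u \<in> A \<longleftrightarrow> v \<notin> A)"
    and len: "length xs \<ge> 2" and dist: "distinct xs" and sub: "set xs \<subseteq> V"
    and step: "\<forall>k<length xs. E (xs!k) (xs!((k+1) mod length xs)) \<and>
                 c (xs!k) (xs!((k+1) mod length xs)) = (xs!k \<in> A)"
  shows "pc_cycle V E c xs"
proof -
  let ?n = "length xs"
  have "\<forall>i<?n. c (xs!i) (xs!((i+1) mod ?n)) \<noteq> c (xs!((i+1) mod ?n)) (xs!((i+2) mod ?n))"
  proof (intro allI impI)
    fix i assume i: "i < ?n"
    define k where "k = (i+1) mod ?n"
    have "?n > 0" using len by linarith
    then have k: "k < ?n" unfolding k_def by (rule mod_less_divisor)
    have e1: "c (xs!i) (xs!k) = (xs!i \<in> A)" "E (xs!i) (xs!k)" using step i k_def by auto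
    have e2: "c (xs!k) (xs!((k+1) mod ?n)) = (xs!k \<in> A)" using step k by auto
    have m: "(k+1) mod ?n = (i+2) mod ?n" unfolding k_def by (simp add: mod_Suc_eq)
    have "(xs!i\<in>A) \<noteq> (xs!k\<in>A)" using bip e1(2) by blast
    then show "c (xs!i) (xs!((i+1) mod ?n)) \<noteq> c (xs!((i+1) mod ?n)) (xs!((i+2) mod ?n))"
      using e1 e2 m k_def by simp
  qed
  then show ?thesis unfolding pc_cycle_def Let_def using len dist sub step by auto
qed

lemma sink:
  assumes G: "two_edge_colored_graph V E c"
    and bip: "\<forall>u v. E u v \<longrightarrow> (u \<in> A \<longleftrightarrow> v \<notin> A)"
    and nocyc: "\<not> has_pc_cycle V E c"
    and fin: "finite S" and ne: "S \<noteq> {}" and SV: "S \<subseteq> V"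
  shows "\<exists>s\<in>S. \<forall>t\<in>S. \<not> (E s t \<and> c s t = (s\<in>A))"
proof (rule ccontr)
  assume "\<not> ?thesis"
  then have "\<forall>s\<in>S. \<exists>t. t \<in> S \<and> E s t \<and> c s t = (s\<in>A)" by blast
  from bchoice[OF this] obtain g where g: "\<forall>s\<in>S. g s \<in> S \<and> E s (g s) \<and> c s (g s) = (s\<in>A)" by blast
  obtain s0 where s0: "s0 \<in> S" using ne by blast
  define w where "w k = (g^^k) s0" for k
  have wS: "w k \<in> S" for k by (induction k) (simp_all add: w_def g s0)
  have wstep: "E (w k) (w (Suc k)) \<and> c (w k) (w (Suc k)) = (w k \<in> A)" for k
    using g wS[of k] by (simp add: w_def)
  have "\<not> inj_on w {..card S}"
  proof
    assume "inj_on w {..card S}"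
    then have "card (w ` {..card S}) = card {..card S}" by (rule card_image)
    also have "\<dots> = Suc (card S)" by simp
    finally have "card (w`{..card S}) > card S" by simp
    moreover have "card (w ` {..card S}) \<le> card S" using card_mono[OF fin] wS by blast
    ultimately show False by simp
  qed
  then obtain x y where "x \<noteq> y" "w x = w y" unfolding inj_on_def by blast
  then have ex: "\<exists>j. \<exists>i<j. w i = w j" by (metis linorder_neqE_nat)
  define P where "P j = (\<exists>i<j. w i = w j)" for j
  define j0 where "j0 = (LEAST j. P j)"
  have "P j0" unfolding j0_def using ex P_def by (metis LeastI_ex)
  then obtain i0 where i0: "i0 < j0" "w i0 = w j0" unfolding P_def by blast
  have inj: "inj_on w {..<j0}"
  proof (rule inj_onI)
    fix a b assume a: "a \<in> {..<j0}" and b: "b \<in> {..<j0}" and wab: "w a = w b"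
    show "a = b"
    proof (rule ccontr)
      assume "a \<noteq> b"
      then have "a < b \<or> b < a" by arith
      then show False
      proof
        assume "a < b" then have "P b" using wab P_def by blast
        then show False using b not_less_Least j0_def by auto
      next
        assume "b < a" then have "P a" using wab P_def by metis
        then show False using a not_less_Least j0_def by auto
      qed
    qed
  qed
  define xs where "xs = map w [i0..<j0]"
  have lenx: "length xs = j0 - i0" by (simp add: xs_def)
  have nth: "k < j0 - i0 \<Longrightarrow> xs!k = w (i0+k)" for k by (simp add: xs_def)
  have dist: "distinct xs" unfolding xs_def distinct_map
    using inj_on_subset[OF inj, of "{i0..<j0}"] by force
  have sub: "set xs \<subseteq> V" using wS SV by (auto simp: xs_def)
  have step: "\<forall>k<length xs. E (xs!k) (xs!((k+1) mod length xs)) \<and>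
                 c (xs!k) (xs!((k+1) mod length xs)) = (xs!k \<in> A)"
  proof (intro allI impI)
    fix k assume k: "k < length xs"
    have "xs!((k+1) mod length xs) = w (Suc (i0+k))"
    proof (cases "Suc k < length xs")
      case True then show ?thesis using nth lenx by simp
    next
      case False
      then have "Suc k = length xs" using k by simp
      then have "(k+1) mod length xs = 0" "Suc (i0+k) = j0" using lenx by auto
      then show ?thesis using nth[of 0] i0 lenx by simp
    qed
    then show "E (xs!k) (xs!((k+1) mod length xs)) \<and>
                 c (xs!k) (xs!((k+1) mod length xs)) = (xs!k \<in> A)"
      using wstep[of "i0+k"] nth[of k] k lenx by simp
  qed
  have "length xs \<ge> 2"
  proof (rule ccontr)
    assume "\<not> length xs \<ge> 2"
    then have "length xs = 1" using lenx i0 by simp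
    then have "E (xs!0) (xs!0)" using step by auto
    then show False using G unfolding two_edge_colored_graph_def by blast
  qed
  then have "pc_cycle V E c xs" using cyc_from_walk[OF G bip _ dist sub step] by simp
  then show False using nocyc unfolding has_pc_cycle_def by blast
qed

lemma order_exists:
  assumes G: "two_edge_colored_graph V E c"
    and bip: "\<forall>u v. E u v \<longrightarrow> (u \<in> A \<longleftrightarrow> v \<notin> A)"
    and nocyc: "\<not> has_pc_cycle V E c"
    and fin: "finite S" and SV: "S \<subseteq> V"
  shows "\<exists>vs. distinct vs \<and> set vs = S \<and> (\<forall>i<length vs. \<forall>j<length vs.
            E (vs!j) (vs!i) \<and> c (vs!j) (vs!i) = (vs!j\<in>A) \<longrightarrow> j < i)"
  using fin SV
proof (induction S rule: finite_psubset_induct)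
  case (psubset S)
  show ?case
  proof (cases "S = {}")
    case True then show ?thesis by (intro exI[of _ "[]"]) simp
  next
    case False
    obtain s where s: "s \<in> S" and sk: "\<forall>t\<in>S. \<not> (E s t \<and> c s t = (s\<in>A))"
      using sink[OF G bip nocyc psubset.hyps(1) False psubset.prems] by blast
    have "S - {s} \<subset> S" using s by blast
    then obtain vs where d: "distinct vs" and st: "set vs = S - {s}" and
      IH: "\<forall>i<length vs. \<forall>j<length vs.
            E (vs!j) (vs!i) \<and> c (vs!j) (vs!i) = (vs!j\<in>A) \<longrightarrow> j < i"
      using psubset.IH[of "S-{s}"] psubset.prems by blast
    show ?thesis
    proof (rule exI[of _ "vs @ [s]"], intro conjI allI impI)
      show "distinct (vs @ [s])" using d st by simp
      show "set (vs @ [s]) = S" using st s by auto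
      fix i j assume i: "i < length (vs @ [s])" and j: "j < length (vs @ [s])"
        and D: "E ((vs @ [s])!j) ((vs @ [s])!i) \<and> c ((vs @ [s])!j) ((vs @ [s])!i) = ((vs @ [s])!j\<in>A)"
      have "set (vs @ [s]) = S" using st s by auto
      then have iS: "(vs @ [s])!i \<in> S" using nth_mem[OF i] by blast
      show "j < i"
      proof (cases "j = length vs")
        case True
        then have "(vs @ [s])!j = s" by simp
        then show ?thesis using D sk iS by auto
      next
        case False
        then have j': "j < length vs" using j by simp
        show ?thesis
        proof (cases "i = length vs")
          case True then show ?thesis using j' by simp
        next
          case False
          then have i': "i < length vs" using i by simp
          then show ?thesis using IH j' D by (simp add: nth_append)
        qed
      qed
    qed
  qed
qed

theorem corollary2:
  fixes V :: "'a set" and E c :: "'a \<Rightarrow> 'a \<Rightarrow> bool"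
  assumes "two_edge_colored_graph V E c"
  shows "pc_acyclic_type5 V E c \<longleftrightarrow> bipartite V E \<and> \<not> has_pc_cycle V E c"
proof
  assume "bipartite V E \<and> \<not> has_pc_cycle V E c"
  then obtain A where bip: "\<forall>u v. E u v \<longrightarrow> (u \<in> A \<longleftrightarrow> v \<notin> A)"
    and nocyc: "\<not> has_pc_cycle V E c" unfolding bipartite_def by blast
  have fin: "finite V" using assms unfolding two_edge_colored_graph_def by blast
  have sym: "\<And>u v. E u v \<Longrightarrow> E v u" "\<And>u v. E u v \<Longrightarrow> c u v = c v u"
    using assms unfolding two_edge_colored_graph_def by blast+
  obtain vs where d: "distinct vs" and st: "set vs = V" and
    ord: "\<forall>i<length vs. \<forall>j<length vs.
            E (vs!j) (vs!i) \<and> c (vs!j) (vs!i) = (vs!j\<in>A) \<longrightarrow> j < i"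
    using order_exists[OF assms bip nocyc fin] by blast
  have "type5_ordering V E c vs"
    unfolding type5_ordering_def
  proof (intro conjI allI impI d st)
    fix i assume i: "i < length vs"
    show "\<exists>a b. a \<noteq> b \<and>
        (\<forall>j<length vs. i < j \<longrightarrow> E (vs ! i) (vs ! j) \<longrightarrow> c (vs ! i) (vs ! j) = a) \<and>
        (\<forall>j<i. E (vs ! i) (vs ! j) \<longrightarrow> c (vs ! i) (vs ! j) = b)"
    proof (rule exI[of _ "vs!i \<in> A"], rule exI[of _ "vs!i \<notin> A"], intro conjI allI impI)
      show "(vs!i \<in> A) \<noteq> (vs!i \<notin> A)" by simp
    next
      fix j assume j: "j < length vs" "i < j" and e: "E (vs ! i) (vs ! j)"
      show "c (vs ! i) (vs ! j) = (vs!i \<in> A)"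
      proof (rule ccontr)
        assume "c (vs ! i) (vs ! j) \<noteq> (vs!i \<in> A)"
        moreover have "(vs!j \<in> A) = (vs!i \<notin> A)" using bip e by blast
        ultimately have "c (vs!i) (vs!j) = (vs!j\<in>A)" by blast
        have "c (vs!j) (vs!i) = (vs!j\<in>A)" using sym(2)[OF e] \<open>c (vs!i) (vs!j) = (vs!j\<in>A)\<close> by simp
        then have "j < i" using ord i j sym(1)[OF e] by blast
        then show False using j by simp
      qed
    next
      fix j assume j: "j < i" and e: "E (vs ! i) (vs ! j)"
      show "c (vs ! i) (vs ! j) = (vs!i \<notin> A)"
      proof (rule ccontr)
        assume "c (vs ! i) (vs ! j) \<noteq> (vs!i \<notin> A)"
        then have "c (vs ! i) (vs ! j) = (vs!i \<in> A)" by blast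
        then have "i < j" using ord i j e by (meson order.strict_trans)
        then show False using j by simp
      qed
    qed
  qed
  then show "pc_acyclic_type5 V E c" unfolding pc_acyclic_type5_def by blast
next
  assume "pc_acyclic_type5 V E c"
  then obtain vs where T: "type5_ordering V E c vs" unfolding pc_acyclic_type5_def by blast
  have T': "distinct vs \<and> set vs = V \<and> (\<forall>i<length vs. \<exists>a b. a \<noteq> b \<and>
        (\<forall>j<length vs. i < j \<longrightarrow> E (vs ! i) (vs ! j) \<longrightarrow> c (vs ! i) (vs ! j) = a) \<and>
        (\<forall>j<i. E (vs ! i) (vs ! j) \<longrightarrow> c (vs ! i) (vs ! j) = b))"
    using T unfolding type5_ordering_def .
  have d: "distinct vs" using T' by (rule conjunct1)
  have st: "set vs = V" using T' by (rule conjunct1[OF conjunct2])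
  have t5: "\<forall>i<length vs. \<exists>a b. a \<noteq> b \<and>
        (\<forall>j<length vs. i < j \<longrightarrow> E (vs ! i) (vs ! j) \<longrightarrow> c (vs ! i) (vs ! j) = a) \<and>
        (\<forall>j<i. E (vs ! i) (vs ! j) \<longrightarrow> c (vs ! i) (vs ! j) = b)"
    using T' by (rule conjunct2[OF conjunct2])
  have sym: "\<And>u v. E u v \<Longrightarrow> E v u" "\<And>u v. E u v \<Longrightarrow> c u v = c v u" "\<And>v. \<not> E v v"
    using assms unfolding two_edge_colored_graph_def by blast+
  have "\<forall>i. \<exists>a. i < length vs \<longrightarrow>
        (\<forall>j<length vs. i < j \<longrightarrow> E (vs ! i) (vs ! j) \<longrightarrow> c (vs ! i) (vs ! j) = a) \<and>
        (\<forall>j<i. E (vs ! i) (vs ! j) \<longrightarrow> c (vs ! i) (vs ! j) = (\<not> a))"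
  proof
    fix i show "\<exists>a. i < length vs \<longrightarrow>
        (\<forall>j<length vs. i < j \<longrightarrow> E (vs ! i) (vs ! j) \<longrightarrow> c (vs ! i) (vs ! j) = a) \<and>
        (\<forall>j<i. E (vs ! i) (vs ! j) \<longrightarrow> c (vs ! i) (vs ! j) = (\<not> a))"
    proof (cases "i < length vs")
      case True
      obtain a b where ab: "a \<noteq> b" and f: "\<forall>j<length vs. i < j \<longrightarrow> E (vs ! i) (vs ! j) \<longrightarrow> c (vs ! i) (vs ! j) = a"
        and g: "\<forall>j<i. E (vs ! i) (vs ! j) \<longrightarrow> c (vs ! i) (vs ! j) = b"
        using t5[rule_format, OF True] by blast
      have bn: "b = (\<not> a)" using ab by blast
      show ?thesis
      proof (rule exI[of _ a], intro impI conjI)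
        show "\<forall>j<length vs. i < j \<longrightarrow> E (vs ! i) (vs ! j) \<longrightarrow> c (vs ! i) (vs ! j) = a" by (rule f)
        show "\<forall>j<i. E (vs ! i) (vs ! j) \<longrightarrow> c (vs ! i) (vs ! j) = (\<not> a)" using g bn by simp
      qed
    next
      case False then show ?thesis by simp
    qed
  qed
  from choice[OF this] obtain F where F0: "\<forall>i. i < length vs \<longrightarrow>
        (\<forall>j<length vs. i < j \<longrightarrow> E (vs ! i) (vs ! j) \<longrightarrow> c (vs ! i) (vs ! j) = F i) \<and>
        (\<forall>j<i. E (vs ! i) (vs ! j) \<longrightarrow> c (vs ! i) (vs ! j) = (\<not> F i))"
    by (elim exE)
  have F: "\<And>i. i < length vs \<Longrightarrow>
        (\<forall>j<length vs. i < j \<longrightarrow> E (vs ! i) (vs ! j) \<longrightarrow> c (vs ! i) (vs ! j) = F i) \<and>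
        (\<forall>j<i. E (vs ! i) (vs ! j) \<longrightarrow> c (vs ! i) (vs ! j) = (\<not> F i))"
    using F0 by (rule allE) (erule mp)
  have fdiff: "F i \<noteq> F j" if i: "i < length vs" and j: "j < length vs" and e: "E (vs!i) (vs!j)" for i j
  proof -
    have "i \<noteq> j" using e sym(3) by auto
    then have "i < j \<or> j < i" by arith
    then show ?thesis
    proof
      assume ij: "i < j"
      have "c (vs!i) (vs!j) = F i" using F[OF i] j ij e by blast
      moreover have "c (vs!j) (vs!i) = (\<not> F j)" using F[OF j] ij sym(1)[OF e] by blast
      ultimately show ?thesis using sym(2)[OF e] by auto
    next
      assume ij: "j < i"
      have "c (vs!i) (vs!j) = (\<not> F i)" using F[OF i] ij e by blast
      moreover have "c (vs!j) (vs!i) = F j" using F[OF j] i ij sym(1)[OF e] by blast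
      ultimately show ?thesis using sym(2)[OF e] by auto
    qed
  qed
  define A where "A = {vs!i | i. i < length vs \<and> F i}"
  have memA: "(vs!i \<in> A) = F i" if "i < length vs" for i
    using that d unfolding A_def by (auto simp: nth_eq_iff_index_eq)
  have Ein: "u \<in> V \<and> v \<in> V" if "E u v" for u v
    using assms that unfolding two_edge_colored_graph_def by blast
  have "bipartite V E"
    unfolding bipartite_def
  proof (intro exI[of _ A] conjI allI impI)
    show "A \<subseteq> V" unfolding A_def using st by auto
    fix u v assume e: "E u v"
    have "u \<in> set vs" "v \<in> set vs" using Ein[OF e] st by auto
    then obtain i j where i: "i < length vs" "u = vs!i" and j: "j < length vs" "v = vs!j"
      by (auto simp: in_set_conv_nth)
    show "(u \<in> A) = (v \<notin> A)" using fdiff[OF i(1) j(1)] e i j memA by auto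
  qed
  moreover have "\<not> has_pc_cycle V E c"
  proof
    assume "has_pc_cycle V E c"
    then obtain xs where "pc_cycle V E c xs" unfolding has_pc_cycle_def by blast
    then have len: "length xs \<ge> 2" and dx: "distinct xs" and sx: "set xs \<subseteq> V"
      and ex: "\<forall>i<length xs. E (xs ! i) (xs ! ((i + 1) mod length xs))"
      and pc: "\<forall>i<length xs. c (xs ! i) (xs ! ((i + 1) mod length xs)) \<noteq>
               c (xs ! ((i + 1) mod length xs)) (xs ! ((i + 2) mod length xs))"
      unfolding pc_cycle_def Let_def by blast+
    let ?n = "length xs"
    define M where "M = {j. j < length vs \<and> vs!j \<in> set xs}"
    have finM: "finite M" unfolding M_def by simp
    have x0: "xs!0 \<in> set xs" using len by (intro nth_mem) linarith
    then have "xs!0 \<in> set vs" using sx st by auto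
    then obtain j where "j < length vs" "vs!j = xs!0" by (auto simp: in_set_conv_nth)
    then have "j \<in> M" unfolding M_def using x0 by simp
    then have neM: "M \<noteq> {}" by blast
    define m where "m = Max M"
    have mM: "m \<in> M" unfolding m_def using finM neM by simp
    have mmax: "\<And>x. x \<in> M \<Longrightarrow> x \<le> m" unfolding m_def using finM by simp
    have mlen: "m < length vs" and "vs!m \<in> set xs" using mM unfolding M_def by auto
    then obtain k where k: "k < ?n" "xs!k = vs!m" by (auto simp: in_set_conv_nth)
    have lower: "\<exists>p<m. xs!q = vs!p" if q: "q < ?n" "q \<noteq> k" for q
    proof -
      have "xs!q \<in> set vs" using q sx st nth_mem[OF q(1)] by blast
      then obtain p where p: "p < length vs" "vs!p = xs!q" by (auto simp: in_set_conv_nth)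
      then have "p \<in> M" unfolding M_def using q by auto
      then have "p \<le> m" by (rule mmax)
      moreover have "p \<noteq> m"
      proof
        assume "p = m"
        then have "xs!q = xs!k" using p k by simp
        then show False using nth_eq_iff_index_eq[OF dx q(1) k(1)] q(2) by simp
      qed
      ultimately have "p < m" by simp
      then show ?thesis using p(2) by (intro exI[of _ p] conjI) simp_all
    qed
    obtain i where i: "i < ?n" "(i+1) mod ?n = k" "(i+2) mod ?n = (k+1) mod ?n"
    proof (cases k)
      case 0
      have "(?n - 1 + 1) mod ?n = 0 \<and> (?n - 1 + 2) mod ?n = (0+1) mod ?n" using len by (simp add: mod_Suc)
      then show ?thesis using that[of "?n - 1"] len 0 by simp
    next
      case (Suc k')
      then show ?thesis using that[of k'] k by simp
    qed
    define q where "q = (k+1) mod ?n"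
    have q: "q < ?n" "q \<noteq> k" unfolding q_def using len k
      by (auto simp: mod_Suc) 
    have ik: "i \<noteq> k" using i len k by (auto simp: mod_Suc split: if_splits)
    obtain p1 where p1: "p1 < m" "xs!i = vs!p1" using lower[OF i(1) ik] by blast
    obtain p2 where p2: "p2 < m" "xs!q = vs!p2" using lower[OF q] by blast
    have "E (xs!i) (xs!((i+1) mod ?n))" using ex i(1) by blast
    then have "E (vs!p1) (vs!m)" using i(2) k(2) p1(2) by simp
    then have e1: "E (vs!m) (vs!p1)" by (rule sym(1))
    have "E (xs!k) (xs!((k+1) mod ?n))" using ex k(1) by blast
    then have e2: "E (vs!m) (vs!p2)" using k(2) p2(2) q_def by simp
    have "c (vs!m) (vs!p1) = (\<not> F m)" using F[OF mlen] p1 e1 by blast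
    moreover have "c (vs!m) (vs!p2) = (\<not> F m)" using F[OF mlen] p2 e2 by blast
    moreover have "c (xs!i) (xs!k) \<noteq> c (xs!k) (xs!q)"
    proof -
      have "c (xs!i) (xs!((i+1) mod ?n)) \<noteq> c (xs!((i+1) mod ?n)) (xs!((i+2) mod ?n))"
        using pc i(1) by blast
      then show ?thesis using i q_def by simp
    qed
    ultimately show False using k p1 p2 sym(2)[OF e1] by simp
  qed
  ultimately show "bipartite V E \<and> \<not> has_pc_cycle V E c" by blast
qed

end
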